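(* Let $s=1$, $n=3$, and $p_{ij}=1/6$ for all $i\neq j$. Let $\beta(x)=(1+x)^{-1}$ or $\beta(x)=e^{-x}$. Let $Y(t)$ be the solution of the gradient flow of relative entropy with initial data $y_1(0)=1$, $y_2(0)=0$, $y_3(0)=-1$. Then $Y(t)$ has the form $y_1(t)=X(t)$, $y_2(t)=0$, $y_3(t)=-X(t)$ with $0\le X(t)\le 1$, and there is a constant $C$ such that $\operatorname{diam}Y(t)\le C\,t^{-1/2}$ for all $t>0$; in particular $\operatorname{diam}Y(t)\to0$ as $t\to\infty$.
   Context: Let $\mathcal{P}_n=\{(i,j): i\neq j\}$ and $(p_{ij})$ a symmetric probability distribution on $\mathcal{P}_n$. For $Y=(y_1,\dots,y_n)\in(\mathbb{R}^s)^n$ define $q_{ij}=\beta(|y_i-y_j|^2)/\sum_{k\neq \ell}\beta(|y_k-y_\ell|^2)$. The gradient flow of relative entropy is the ODE system $$\frac{dy_i}{dt}=4\sum_{j\neq i}(p_{ij}-q_{ij})(y_i-y_j)(\log\beta)'(|y_i-y_j|^2),\qquad i=1,\dots,n.$$ $\operatorname{diam}Y=\max_{i,j}|y_i-y_j|$. *)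

theory Defs
  imports "HOL-Analysis.Analysis"
begin

text \<open>Configurations in dimension s = 1: Y = (y_1,...,y_n) is represented as a
  function nat => real, only indices 1..n are relevant.\<close>

definition qsim :: "nat \<Rightarrow> (real \<Rightarrow> real) \<Rightarrow> (nat \<Rightarrow> real) \<Rightarrow> nat \<Rightarrow> nat \<Rightarrow> real" where
  "qsim n \<beta> y i j =
     \<beta> ((y i - y j)\<^sup>2) /
     (\<Sum>k\<in>{1..n}. \<Sum>l\<in>{1..n} - {k}. \<beta> ((y k - y l)\<^sup>2))"

definition flow_rhs :: "nat \<Rightarrow> (nat \<Rightarrow> nat \<Rightarrow> real) \<Rightarrow> (real \<Rightarrow> real) \<Rightarrow> (nat \<Rightarrow> real) \<Rightarrow> nat \<Rightarrow> real" where
  "flow_rhs n p \<beta> y i =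
     4 * (\<Sum>j\<in>{1..n} - {i}. (p i j - qsim n \<beta> y i j) * (y i - y j)
            * deriv (\<lambda>x. ln (\<beta> x)) (\<bar>y i - y j\<bar>\<^sup>2))"

definition is_flow_solution :: "nat \<Rightarrow> (nat \<Rightarrow> nat \<Rightarrow> real) \<Rightarrow> (real \<Rightarrow> real) \<Rightarrow> (real \<Rightarrow> nat \<Rightarrow> real) \<Rightarrow> bool" where
  "is_flow_solution n p \<beta> Y \<longleftrightarrow>
     (\<forall>t\<ge>0. \<forall>i\<in>{1..n}.
        ((\<lambda>\<tau>. Y \<tau> i) has_real_derivative flow_rhs n p \<beta> (Y t) i) (at t within {0..}))"

definition diam :: "nat \<Rightarrow> (nat \<Rightarrow> real) \<Rightarrow> real" where
  "diam n y = Max {\<bar>y i - y j\<bar> | i j. i \<in> {1..n} \<and> j \<in> {1..n}}"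

end

theory Submission
  imports Defs
begin


definition psi :: "(real\<Rightarrow>real) \<Rightarrow> real \<Rightarrow> real" where
  "psi \<beta> r = deriv (\<lambda>x. ln (\<beta> x)) r"
definition Sd :: "(real \<Rightarrow> real) \<Rightarrow> (nat \<Rightarrow> real) \<Rightarrow> real" where
  "Sd \<beta> y = \<beta>((y 1 - y 2)\<^sup>2) + \<beta>((y 1 - y 3)\<^sup>2) + \<beta>((y 2 - y 3)\<^sup>2)"

lemma set3: "{1..3::nat} = {1,2,3}" by auto

lemma den3: "(\<Sum>k\<in>{1..3::nat}. \<Sum>l\<in>{1..3} - {k}. \<beta> ((y k - y l)\<^sup>2)) = 2 * Sd \<beta> y"
  unfolding set3 by (simp add: Sd_def insert_Diff_if power2_commute)

lemma rhs1: "flow_rhs 3 (\<lambda>i j. 1/6) \<beta> y 1 = 4 * ((1/6 - \<beta>((y 1 - y 2)\<^sup>2)/(2*Sd \<beta> y)) * (y 1 - y 2) * psi \<beta> ((y 1 - y 2)\<^sup>2)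
   + (1/6 - \<beta>((y 1 - y 3)\<^sup>2)/(2*Sd \<beta> y)) * (y 1 - y 3) * psi \<beta> ((y 1 - y 3)\<^sup>2))"
  unfolding flow_rhs_def qsim_def den3 psi_def unfolding set3 by (simp add: insert_Diff_if power2_commute)

lemma rhs2: "flow_rhs 3 (\<lambda>i j. 1/6) \<beta> y 2 = 4 * ((1/6 - \<beta>((y 1 - y 2)\<^sup>2)/(2*Sd \<beta> y)) * (y 2 - y 1) * psi \<beta> ((y 1 - y 2)\<^sup>2)
   + (1/6 - \<beta>((y 2 - y 3)\<^sup>2)/(2*Sd \<beta> y)) * (y 2 - y 3) * psi \<beta> ((y 2 - y 3)\<^sup>2))"
  unfolding flow_rhs_def qsim_def den3 psi_def unfolding set3 by (simp add: insert_Diff_if power2_commute power2_commute insert_Diff_if)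

lemma rhs3: "flow_rhs 3 (\<lambda>i j. 1/6) \<beta> y 3 = 4 * ((1/6 - \<beta>((y 1 - y 3)\<^sup>2)/(2*Sd \<beta> y)) * (y 3 - y 1) * psi \<beta> ((y 1 - y 3)\<^sup>2)
   + (1/6 - \<beta>((y 2 - y 3)\<^sup>2)/(2*Sd \<beta> y)) * (y 3 - y 2) * psi \<beta> ((y 2 - y 3)\<^sup>2))"
  unfolding flow_rhs_def qsim_def den3 psi_def unfolding set3 by (simp add: insert_Diff_if power2_commute power2_commute insert_Diff_if)


definition symc :: "real \<Rightarrow> nat \<Rightarrow> real" where
  "symc X = (\<lambda>i. if i = 1 then X else if i = 3 then -X else 0)"
definition Fs :: "(real \<Rightarrow> real) \<Rightarrow> real \<Rightarrow> real" where
  "Fs \<beta> X = - flow_rhs 3 (\<lambda>i j. 1/6) \<beta> (symc X) 1"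

lemma rhs_sym2: "flow_rhs 3 (\<lambda>i j. 1/6) \<beta> (symc X) 2 = 0"
  unfolding rhs2 by (simp add: symc_def algebra_simps)

lemma rhs_sym3: "flow_rhs 3 (\<lambda>i j. 1/6) \<beta> (symc X) 3 = Fs \<beta> X"
  unfolding Fs_def rhs1 rhs3 by (simp add: symc_def algebra_simps)

lemma rhs_sum: "flow_rhs 3 (\<lambda>i j. 1/6) \<beta> y 1 + flow_rhs 3 (\<lambda>i j. 1/6) \<beta> y 2 + flow_rhs 3 (\<lambda>i j. 1/6) \<beta> y 3 = 0"
  unfolding rhs1 rhs2 rhs3 unfolding divide_inverse by algebra

lemma rhs_cong:
  assumes "y 1 = z 1" "y 2 = z 2" "y 3 = z 3"
  shows "flow_rhs 3 (\<lambda>i j. 1/6) \<beta> y 1 = flow_rhs 3 (\<lambda>i j. 1/6) \<beta> z 1"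
    "flow_rhs 3 (\<lambda>i j. 1/6) \<beta> y 2 = flow_rhs 3 (\<lambda>i j. 1/6) \<beta> z 2"
    "flow_rhs 3 (\<lambda>i j. 1/6) \<beta> y 3 = flow_rhs 3 (\<lambda>i j. 1/6) \<beta> z 3"
  unfolding rhs1 rhs2 rhs3 Sd_def using assms by simp_all

lemma cont_within:
  fixes f f' :: "real \<Rightarrow> real"
  assumes "\<And>t. 0 \<le> t \<Longrightarrow> (f has_real_derivative f' t) (at t within {0..})"
  shows "continuous_on {0..} f"
proof -
  have "continuous (at t within {0..}) f" if "t \<in> {0..}" for t
    using DERIV_continuous[OF assms[of t]] that by simp
  then show ?thesis unfolding continuous_on_eq_continuous_within by blast
qed

lemma mono_within:
  fixes f f' :: "real \<Rightarrow> real"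
  assumes d: "\<And>t. 0 \<le> t \<Longrightarrow> t \<le> T \<Longrightarrow> (f has_real_derivative f' t) (at t within {0..})"
    and n: "\<And>t. 0 \<le> t \<Longrightarrow> t \<le> T \<Longrightarrow> f' t \<le> 0" and ab: "0 \<le> a" "a \<le> b" "b \<le> T"
  shows "f b \<le> f a"
proof (rule DERIV_nonpos_imp_decreasing_open[OF \<open>a \<le> b\<close>])
  fix x assume x: "a < x" "x < b"
  have "at x within {0..} = at x" by (rule at_within_interior) (use x ab in auto)
  then show "\<exists>y. DERIV f x :> y \<and> y \<le> 0" using d[of x] n[of x] x ab by auto
next
  have sub: "{a..b} \<subseteq> {0..}" using ab by auto
  have "continuous (at x within {0..}) f" if "x \<in> {a..b}" for x
    using that ab by (intro DERIV_continuous[OF d]) auto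
  then have "continuous (at x within {a..b}) f" if "x \<in> {a..b}" for x
    using that continuous_within_subset[OF _ sub] by blast
  then show "continuous_on {a..b} f" unfolding continuous_on_eq_continuous_within by blast
qed


locale fs =
  fixes \<beta> :: "real \<Rightarrow> real" and L c M :: real
  assumes bpos: "\<And>x. x \<ge> 0 \<Longrightarrow> \<beta> x > 0"
    and bcont: "continuous_on {0..} \<beta>"
    and lipA: "\<And>x y. \<bar>x * psi \<beta> (x\<^sup>2) - y * psi \<beta> (y\<^sup>2)\<bar> \<le> L * \<bar>x - y\<bar>"
    and lipB: "\<And>x y. \<bar>x * \<beta> (x\<^sup>2) * psi \<beta> (x\<^sup>2) - y * \<beta> (y\<^sup>2) * psi \<beta> (y\<^sup>2)\<bar> \<le> L * \<bar>x - y\<bar>"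
    and Fsign: "\<And>X. X * Fs \<beta> X \<ge> 0"
    and Flow: "\<And>X. 0 \<le> X \<Longrightarrow> X \<le> 1 \<Longrightarrow> c * X ^ 3 \<le> Fs \<beta> X"
    and cpos: "c > 0"
    and Fcont: "continuous_on {0<..} (Fs \<beta>)"
    and Fpos: "\<And>x. 0 < x \<Longrightarrow> x \<le> 1 \<Longrightarrow> 0 < Fs \<beta> x"
    and Fup: "\<And>x. 0 < x \<Longrightarrow> x \<le> 1 \<Longrightarrow> Fs \<beta> x \<le> M * x"
    and Mpos: "M > 0"
begin

lemma Lnn: "L \<ge> 0"
proof -
  have "0 \<le> \<bar>1 * psi \<beta> (1\<^sup>2) - 0 * psi \<beta> (0\<^sup>2)\<bar>" by simp
  also have "\<dots> \<le> L * \<bar>1 - 0\<bar>" by (rule lipA)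
  finally show ?thesis by simp
qed

lemma Sd_pos: "Sd \<beta> y > 0"
  unfolding Sd_def using bpos[of "(y 1 - y 2)\<^sup>2"] bpos[of "(y 1 - y 3)\<^sup>2"] bpos[of "(y 2 - y 3)\<^sup>2"] by simp

lemma sym_sol:
  assumes sol: "is_flow_solution 3 (\<lambda>i j. 1/6) \<beta> Y" and i0: "Y 0 1 = 1" "Y 0 2 = 0" "Y 0 3 = -1"
  shows "\<forall>t\<ge>0. Y t 2 = 0 \<and> Y t 3 = - Y t 1"
proof -
  define r where "r t i = flow_rhs 3 (\<lambda>i j. 1/6) \<beta> (Y t) i" for t i
  have d: "((\<lambda>\<tau>. Y \<tau> i) has_real_derivative r t i) (at t within {0..})" if "0 \<le> t" "1 \<le> i" "i \<le> 3" for t i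
    using sol that unfolding is_flow_solution_def r_def by auto
  have d1: "((\<lambda>\<tau>. Y \<tau> 1) has_real_derivative r t 1) (at t within {0..})" if "0 \<le> t" for t
    using d[of t 1] that by simp
  have d2: "((\<lambda>\<tau>. Y \<tau> 2) has_real_derivative r t 2) (at t within {0..})" if "0 \<le> t" for t
    using d[of t 2] that by simp
  have d3: "((\<lambda>\<tau>. Y \<tau> 3) has_real_derivative r t 3) (at t within {0..})" if "0 \<le> t" for t
    using d[of t 3] that by simp
  have rs: "r t 1 + r t 2 + r t 3 = 0" for t unfolding r_def by (rule rhs_sum)
  have sum0: "Y t 1 + Y t 2 + Y t 3 = 0" if "0 \<le> t" for t
  proof -
    have ds: "((\<lambda>\<tau>. Y \<tau> 1 + Y \<tau> 2 + Y \<tau> 3) has_real_derivative 0) (at s within {0..})" if "0 \<le> s" for s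
      using DERIV_add[OF DERIV_add[OF d1 d2] d3, of s] rs[of s] that by simp
    have dm: "((\<lambda>\<tau>. - (Y \<tau> 1 + Y \<tau> 2 + Y \<tau> 3)) has_real_derivative - 0) (at s within {0..})" if "0 \<le> s" for s
      using DERIV_minus[OF ds[OF that]] .
    have "Y t 1 + Y t 2 + Y t 3 \<le> Y 0 1 + Y 0 2 + Y 0 3"
      using mono_within[of t "\<lambda>\<tau>. Y \<tau> 1 + Y \<tau> 2 + Y \<tau> 3" "\<lambda>_. 0" 0 t] ds that by auto
    moreover have "- (Y t 1 + Y t 2 + Y t 3) \<le> - (Y 0 1 + Y 0 2 + Y 0 3)"
      using mono_within[of t "\<lambda>\<tau>. - (Y \<tau> 1 + Y \<tau> 2 + Y \<tau> 3)" "\<lambda>_. - 0" 0 t] dm that by auto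
    ultimately show ?thesis using i0 by simp
  qed
  have y2: "Y t 2 = 0" if "0 \<le> t" for t
  proof -
    define T where "T = t"
    have ci: "continuous_on {0..T} (\<lambda>\<tau>. Y \<tau> i)" if "1 \<le> i" "i \<le> 3" for i
      using cont_within[of "\<lambda>\<tau>. Y \<tau> i", OF d[OF _ that]] continuous_on_subset by fastforce
    have cb: "continuous_on {0..T} (\<lambda>\<tau>. \<beta> ((Y \<tau> i - Y \<tau> j)\<^sup>2))" if "1 \<le> i" "i \<le> 3" "1 \<le> j" "j \<le> 3" for i j
      by (rule continuous_on_compose2[OF bcont]) (use ci that in \<open>auto intro!: continuous_intros\<close>)
    have cSd: "continuous_on {0..T} (\<lambda>\<tau>. Sd \<beta> (Y \<tau>))"
      unfolding Sd_def by (intro continuous_intros cb) auto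
    have cS: "continuous_on {0..T} (\<lambda>\<tau>. 1 / (2 * Sd \<beta> (Y \<tau>)))"
      apply (intro continuous_intros cSd) using Sd_pos by (metis mult_eq_0_iff less_irrefl zero_neq_numeral)
    obtain t0 where t0: "t0 \<in> {0..T}" "\<And>s. s \<in> {0..T} \<Longrightarrow> 1 / (2 * Sd \<beta> (Y s)) \<le> 1 / (2 * Sd \<beta> (Y t0))"
      using continuous_attains_sup[OF compact_Icc _ cS] \<open>0 \<le> t\<close> T_def by auto
    define Mb where "Mb = 1 / (2 * Sd \<beta> (Y t0))"
    have Mb0: "Mb \<ge> 0" unfolding Mb_def using Sd_pos[of "Y t0"] by simp
    define K where "K = 12 * L * (1/6 + Mb)"
    have K0: "K \<ge> 0" unfolding K_def using Lnn Mb0 by simp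
    have bnd: "\<bar>r s 2\<bar> \<le> K * \<bar>Y s 2\<bar>" if s: "0 \<le> s" "s \<le> T" for s
    proof -
      define u where "u = Y s 1 - Y s 2"
      define v where "v = Y s 2 - Y s 3"
      define w where "w = 1 / (2 * Sd \<beta> (Y s))"
      define a where "a = v * psi \<beta> (v\<^sup>2) - u * psi \<beta> (u\<^sup>2)"
      define b where "b = v * \<beta> (v\<^sup>2) * psi \<beta> (v\<^sup>2) - u * \<beta> (u\<^sup>2) * psi \<beta> (u\<^sup>2)"
      have eq0: "r s 2 = 4 * ((1/6 - \<beta>(u\<^sup>2)/(2*Sd \<beta> (Y s))) * (-u) * psi \<beta> (u\<^sup>2)
             + (1/6 - \<beta>(v\<^sup>2)/(2*Sd \<beta> (Y s))) * v * psi \<beta> (v\<^sup>2))"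
        unfolding r_def rhs2 u_def v_def by simp
      have eq: "r s 2 = 4 * (a / 6 - w * b)"
        unfolding eq0 a_def b_def w_def by (simp add: algebra_simps diff_divide_distrib)
      have vu: "v - u = 3 * Y s 2" using sum0[of s] s unfolding u_def v_def by simp
      have ha: "\<bar>a\<bar> \<le> L * (3 * \<bar>Y s 2\<bar>)" unfolding a_def using lipA[of v u] vu by simp
      have hb: "\<bar>b\<bar> \<le> L * (3 * \<bar>Y s 2\<bar>)" unfolding b_def using lipB[of v u] vu by simp
      have w0: "0 \<le> w" "w \<le> Mb" unfolding w_def Mb_def using Sd_pos[of "Y s"] t0(2)[of s] s by auto
      have "\<bar>a / 6 - w * b\<bar> \<le> \<bar>a / 6\<bar> + \<bar>w * b\<bar>" by (rule abs_triangle_ineq4)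
      also have "\<dots> = \<bar>a\<bar> / 6 + w * \<bar>b\<bar>" using w0 by (simp add: abs_mult)
      finally have t1: "\<bar>r s 2\<bar> \<le> 4 * (\<bar>a\<bar> / 6 + w * \<bar>b\<bar>)" unfolding eq by (simp add: abs_mult)
      have t2: "w * \<bar>b\<bar> \<le> Mb * (L * (3 * \<bar>Y s 2\<bar>))" by (rule mult_mono[OF w0(2) hb Mb0 abs_ge_zero])
      have "\<bar>r s 2\<bar> \<le> 4 * (L * (3 * \<bar>Y s 2\<bar>) / 6 + Mb * (L * (3 * \<bar>Y s 2\<bar>)))"
      proof -
        have t3: "\<bar>a\<bar>/6 \<le> L * (3 * \<bar>Y s 2\<bar>) / 6" using ha by simp
        have "4 * (\<bar>a\<bar> / 6 + w * \<bar>b\<bar>) \<le> 4 * (L * (3 * \<bar>Y s 2\<bar>) / 6 + Mb * (L * (3 * \<bar>Y s 2\<bar>)))"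
          by (intro mult_left_mono add_mono t3 t2) simp
        with t1 show ?thesis by (rule order_trans)
      qed
      also have "\<dots> = K * \<bar>Y s 2\<bar>" unfolding K_def by (simp add: algebra_simps)
      finally show ?thesis .
    qed
    define g where "g s = (Y s 2)\<^sup>2 * exp (- (2 * K) * s)" for s
    have dg: "(g has_real_derivative (2 * Y s 2 * r s 2 * exp (- (2 * K) * s) - 2 * K * (Y s 2)\<^sup>2 * exp (- (2 * K) * s))) (at s within {0..})"
      if "0 \<le> s" for s
    proof -
      have h1: "((\<lambda>\<tau>. (Y \<tau> 2)\<^sup>2) has_real_derivative (2 * Y s 2 * r s 2)) (at s within {0..})"
        using DERIV_power[OF d2[OF that], of 2] by (simp add: algebra_simps)
      have h2: "((\<lambda>\<tau>. exp (- (2 * K) * \<tau>)) has_real_derivative exp (- (2 * K) * s) * (- (2 * K))) (at s within {0..})"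
        by (auto intro!: derivative_eq_intros)
      show ?thesis unfolding g_def by (rule DERIV_cong[OF DERIV_mult[OF h1 h2]]) (simp add: algebra_simps)
    qed
    have ng: "2 * Y s 2 * r s 2 * exp (- (2 * K) * s) - 2 * K * (Y s 2)\<^sup>2 * exp (- (2 * K) * s) \<le> 0"
      if "0 \<le> s" "s \<le> T" for s
    proof -
      have "Y s 2 * r s 2 \<le> \<bar>Y s 2\<bar> * \<bar>r s 2\<bar>" by (simp add: abs_mult[symmetric])
      also have "\<dots> \<le> \<bar>Y s 2\<bar> * (K * \<bar>Y s 2\<bar>)" using bnd[OF that] by (simp add: mult_left_mono)
      also have "\<dots> = K * (Y s 2)\<^sup>2" by (simp add: power2_eq_square abs_mult_self_eq)
      finally have "Y s 2 * r s 2 \<le> K * (Y s 2)\<^sup>2" .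
      then show ?thesis by (simp add: algebra_simps)
    qed
    have "g T \<le> g 0" by (rule mono_within[of T g, OF dg ng]) (use that T_def in auto)
    moreover have "g 0 = 0" unfolding g_def using i0 by simp
    moreover have "g T \<ge> 0" unfolding g_def by simp
    ultimately have "(Y T 2)\<^sup>2 * exp (- (2 * K) * T) = 0" unfolding g_def by linarith
    then show ?thesis unfolding T_def by simp
  qed
  show ?thesis using sum0 y2 by force
qed

end


lemma diam_le:
  assumes "\<And>i j. i \<in> {1..3} \<Longrightarrow> j \<in> {1..3} \<Longrightarrow> \<bar>y i - y j\<bar> \<le> B"
  shows "diam 3 y \<le> B" "0 \<le> diam 3 y"
proof -
  have eq: "{\<bar>y i - y j\<bar> | i j. i \<in> {1..3::nat} \<and> j \<in> {1..3}} = (\<lambda>(i,j). \<bar>y i - y j\<bar>) ` ({1..3} \<times> {1..3})"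
    by force
  have fin: "finite {\<bar>y i - y j\<bar> | i j. i \<in> {1..3::nat} \<and> j \<in> {1..3}}" unfolding eq by simp
  have mem: "\<bar>y 1 - y 1\<bar> \<in> {\<bar>y i - y j\<bar> | i j. i \<in> {1..3::nat} \<and> j \<in> {1..3}}" by force
  then have ne: "{\<bar>y i - y j\<bar> | i j. i \<in> {1..3::nat} \<and> j \<in> {1..3}} \<noteq> {}" by blast
  show "diam 3 y \<le> B" unfolding diam_def using Max_le_iff[OF fin ne] assms by blast
  show "0 \<le> diam 3 y" unfolding diam_def using Max_ge[OF fin mem] by simp
qed

context fs
begin

lemma exist: "\<exists>Y. is_flow_solution 3 (\<lambda>i j. 1/6) \<beta> Y \<and> Y 0 1 = 1 \<and> Y 0 2 = 0 \<and> Y 0 3 = -1"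
proof -
  define e where "e \<sigma> = exp (- max \<sigma> 0)" for \<sigma> :: real
  have e01: "0 < e \<sigma>" "e \<sigma> \<le> 1" for \<sigma> unfolding e_def by auto
  define k where "k \<sigma> = e \<sigma> / Fs \<beta> (e \<sigma>)" for \<sigma>
  have kpos: "k \<sigma> \<ge> 1 / M" for \<sigma>
  proof -
    have "Fs \<beta> (e \<sigma>) \<le> M * e \<sigma>" "0 < Fs \<beta> (e \<sigma>)" using Fup Fpos e01 by auto
    then show ?thesis unfolding k_def using e01[of \<sigma>] Mpos by (simp add: field_simps)
  qed
  have kpos': "k \<sigma> > 0" for \<sigma> using kpos[of \<sigma>] Mpos by (smt (verit) divide_pos_pos)
  have c1: "continuous_on {0<..1} (\<lambda>x. x / Fs \<beta> x)"
    by (intro continuous_intros continuous_on_subset[OF Fcont]) (use Fpos in \<open>auto simp: less_imp_neq[symmetric]\<close>)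
  have c2: "continuous_on UNIV k"
    unfolding k_def e_def
    by (rule continuous_on_compose2[OF c1]) (auto intro!: continuous_intros)
  have kc: "isCont k x" for x using c2 continuous_on_eq_continuous_at[of UNIV k] by simp
  obtain T0 where T0: "\<And>x::real. -\<infinity> < ereal x \<Longrightarrow> ereal x < \<infinity> \<Longrightarrow> (T0 has_vector_derivative k x) (at x)"
    using einterval_antiderivative[of "-\<infinity>" "\<infinity>" k] kc by auto
  define T where "T s = T0 s - T0 0" for s
  have dT: "(T has_real_derivative k s) (at s)" for s
    unfolding T_def using T0[of s] unfolding has_real_derivative_iff_has_vector_derivative[symmetric]
    by (auto intro!: derivative_eq_intros)
  have T00: "T 0 = 0" unfolding T_def by simp
  have Tcont: "isCont T s" for s using dT DERIV_isCont by blast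
  have Tmono: "T a < T b" if "a < b" for a b
    using DERIV_pos_imp_increasing[OF that] dT kpos' by blast
  have Tlow: "T s \<ge> s / M" if "s \<ge> 0" for s
  proof -
    have "(\<lambda>x. T x - x / M) 0 \<le> (\<lambda>x. T x - x / M) s"
      by (rule DERIV_nonneg_imp_nondecreasing[OF that])
        (use Mpos in \<open>auto intro!: exI[of _ "k _ - 1/M"] derivative_eq_intros dT simp: kpos\<close>)
    then show ?thesis using T00 by simp
  qed
  have Tupp: "T s \<le> s / M" if "s \<le> 0" for s
  proof -
    have "(\<lambda>x. T x - x / M) s \<le> (\<lambda>x. T x - x / M) 0"
      by (rule DERIV_nonneg_imp_nondecreasing[OF that])
        (use Mpos in \<open>auto intro!: exI[of _ "k _ - 1/M"] derivative_eq_intros dT simp: kpos\<close>)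
    then show ?thesis using T00 by simp
  qed
  have Tsurj: "\<exists>s. T s = t" for t
  proof -
    have "T (- M * \<bar>t\<bar>) \<le> t" using Tupp[of "- M * \<bar>t\<bar>"] Mpos by (simp add: mult_nonneg_nonneg)
    moreover have "t \<le> T (M * \<bar>t\<bar>)" using Tlow[of "M * \<bar>t\<bar>"] Mpos by simp
    moreover have "- M * \<bar>t\<bar> \<le> M * \<bar>t\<bar>" using Mpos by simp
    moreover have "continuous_on {- M * \<bar>t\<bar>..M * \<bar>t\<bar>} T" using Tcont by (simp add: continuous_at_imp_continuous_on)
    ultimately show ?thesis using IVT'[of T "- M * \<bar>t\<bar>" t "M * \<bar>t\<bar>"] by blast
  qed
  have Tinj: "T a = T b \<Longrightarrow> a = b" for a b using Tmono[of a b] Tmono[of b a] by (cases a b rule: linorder_cases) auto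
  define Si where "Si t = (THE s. T s = t)" for t
  have TSi: "T (Si t) = t" for t
  proof -
    have "\<exists>!s. T s = t" using Tsurj[of t] Tinj by blast
    then show ?thesis unfolding Si_def by (rule theI')
  qed
  have SiT: "Si (T s) = s" for s using TSi[of "T s"] Tinj by blast
  have Sic: "isCont Si t" for t
    using isCont_inverse_function[where d=1 and x="Si t" and f=T and g=Si] SiT Tcont TSi by auto
  have dSi: "(Si has_real_derivative inverse (k (Si t))) (at t)" for t
  proof (rule DERIV_inverse_function[where f=T and g=Si and x=t and a="t - 1" and b="t + 1"])
    show "(T has_real_derivative k (Si t)) (at (Si t))" by (rule dT)
    show "k (Si t) \<noteq> 0" using kpos'[of "Si t"] by linarith
  qed (simp_all add: TSi Sic)
  have Sinn: "Si t \<ge> 0" if "t \<ge> 0" for t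
  proof (rule ccontr)
    assume "\<not> Si t \<ge> 0"
    then have "T (Si t) < T 0" using Tmono by simp
    then show False using TSi T00 that by simp
  qed
  have Si0: "Si 0 = 0" using SiT[of 0] T00 by simp
  define X where "X t = exp (- Si t)" for t
  have dX: "(X has_real_derivative - Fs \<beta> (X t)) (at t)" if "t \<ge> 0" for t
  proof -
    have ek: "k (Si t) = X t / Fs \<beta> (X t)" unfolding k_def e_def X_def using Sinn[OF that] by simp
    have F0: "0 < Fs \<beta> (X t)" using Fpos[of "X t"] Sinn[OF that] unfolding X_def by simp
    have "(X has_real_derivative exp (- Si t) * (- inverse (k (Si t)))) (at t)"
      unfolding X_def by (auto intro!: derivative_eq_intros dSi)
    moreover have "exp (- Si t) * (- inverse (k (Si t))) = - Fs \<beta> (X t)"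
      unfolding ek using F0 unfolding X_def by (simp add: field_simps)
    ultimately show ?thesis by simp
  qed
  define Y where "Y t = symc (X t)" for t
  have "is_flow_solution 3 (\<lambda>i j. 1/6) \<beta> Y"
    unfolding is_flow_solution_def
  proof (intro allI impI ballI)
    fix t :: real and i :: nat assume t: "0 \<le> t" and i: "i \<in> {1..3}"
    then have "i = 1 \<or> i = 2 \<or> i = 3" by auto
    then show "((\<lambda>\<tau>. Y \<tau> i) has_real_derivative flow_rhs 3 (\<lambda>i j. 1 / 6) \<beta> (Y t) i) (at t within {0..})"
    proof (elim disjE)
      assume "i = 1"
      then show ?thesis unfolding Y_def using dX[OF t] by (auto simp: symc_def Fs_def intro: has_field_derivative_at_within)
    next
      assume "i = 2"
      then show ?thesis unfolding Y_def using rhs_sym2 by (simp add: symc_def)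
    next
      assume "i = 3"
      have "((\<lambda>\<tau>. - X \<tau>) has_real_derivative Fs \<beta> (X t)) (at t within {0..})"
        using DERIV_minus[OF dX[OF t]] by (auto intro: has_field_derivative_at_within)
      then show ?thesis unfolding Y_def \<open>i = 3\<close> rhs_sym3 by (simp add: symc_def)
    qed
  qed
  moreover have "Y 0 1 = 1" "Y 0 2 = 0" "Y 0 3 = -1" unfolding Y_def X_def symc_def Si0 by simp_all
  ultimately show ?thesis by blast
qed


lemma decay:
  assumes sol: "is_flow_solution 3 (\<lambda>i j. 1/6) \<beta> Y" and i0: "Y 0 1 = 1" "Y 0 2 = 0" "Y 0 3 = -1"
  shows "(\<exists>X :: real \<Rightarrow> real. \<forall>t\<ge>0. Y t 1 = X t \<and> Y t 2 = 0 \<and> Y t 3 = - X t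
                                      \<and> 0 \<le> X t \<and> X t \<le> 1)
        \<and> (\<exists>C. \<forall>t>0. diam 3 (Y t) \<le> C * t powr (-1/2))
        \<and> ((\<lambda>t. diam 3 (Y t)) \<longlongrightarrow> 0) at_top"
proof -
  have ss: "Y t 2 = 0" "Y t 3 = - Y t 1" if "t \<ge> 0" for t using sym_sol[OF assms] that by auto
  define X where "X t = Y t 1" for t
  have d1: "((\<lambda>\<tau>. Y \<tau> 1) has_real_derivative flow_rhs 3 (\<lambda>i j. 1/6) \<beta> (Y t) 1) (at t within {0..})" if "0 \<le> t" for t
    using sol that unfolding is_flow_solution_def by auto
  have dX: "(X has_real_derivative - Fs \<beta> (X t)) (at t within {0..})" if "0 \<le> t" for t
  proof -
    have "flow_rhs 3 (\<lambda>i j. 1/6) \<beta> (Y t) 1 = flow_rhs 3 (\<lambda>i j. 1/6) \<beta> (symc (X t)) 1"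
      by (rule rhs_cong) (use ss[OF that] in \<open>simp_all add: symc_def X_def\<close>)
    then show ?thesis using d1[OF that] unfolding Fs_def X_def by simp
  qed
  have cX: "continuous_on {0..} X" by (rule cont_within[OF dX])
  have sq: "(X b)\<^sup>2 \<le> (X a)\<^sup>2" if "0 \<le> a" "a \<le> b" for a b
  proof (rule mono_within[of b "\<lambda>t. (X t)\<^sup>2" "\<lambda>t. 2 * X t * (- Fs \<beta> (X t))" a b])
    show "((\<lambda>t. (X t)\<^sup>2) has_real_derivative 2 * X t * - Fs \<beta> (X t)) (at t within {0..})" if "0 \<le> t" for t
      using DERIV_power[OF dX[OF that], of 2] by (simp add: algebra_simps)
    show "2 * X t * - Fs \<beta> (X t) \<le> 0" for t using Fsign[of "X t"] by simp
  qed (use that in auto)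
  have X0: "X 0 = 1" unfolding X_def using i0 by simp
  have Xle: "X t \<le> 1" if "0 \<le> t" for t
  proof -
    have "(X t)\<^sup>2 \<le> 1\<^sup>2" using sq[of 0 t] that X0 by simp
    then have "\<bar>X t\<bar> \<le> \<bar>1\<bar>" by (simp only: abs_le_square_iff)
    then show ?thesis by simp
  qed
  have Xge: "X t \<ge> 0" if t: "0 \<le> t" for t
  proof (rule ccontr)
    assume neg: "\<not> X t \<ge> 0"
    have "continuous_on {0..t} X" using cX continuous_on_subset by fastforce
    then obtain t0 where t0: "0 \<le> t0" "t0 \<le> t" "X t0 = 0"
      using IVT2'[of X t 0 0] neg X0 t by auto
    have "(X t)\<^sup>2 \<le> (X t0)\<^sup>2" using sq[OF t0(1) t0(2)] t0 by simp
    then show False using t0 neg by simp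
  qed
  have part1: "\<exists>X :: real \<Rightarrow> real. \<forall>t\<ge>0. Y t 1 = X t \<and> Y t 2 = 0 \<and> Y t 3 = - X t \<and> 0 \<le> X t \<and> X t \<le> 1"
    by (rule exI[of _ X]) (use ss Xge Xle in \<open>auto simp: X_def\<close>)
  define C where "C = 2 / sqrt (2 * c)"
  have C0: "C > 0" unfolding C_def using cpos by simp
  have dm: "diam 3 (Y t) \<le> 2 * X t" "0 \<le> diam 3 (Y t)" if t: "0 \<le> t" for t
  proof -
    have "\<bar>Y t i - Y t j\<bar> \<le> 2 * X t" if "i \<in> {1..3}" "j \<in> {1..3}" for i j
    proof -
      have "i = 1 \<or> i = 2 \<or> i = 3" "j = 1 \<or> j = 2 \<or> j = 3" using that by auto
      then show ?thesis using ss[OF t] Xge[OF t] unfolding X_def by auto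
    qed
    then show "diam 3 (Y t) \<le> 2 * X t" "0 \<le> diam 3 (Y t)" using diam_le by blast+
  qed
  have bound: "diam 3 (Y t) \<le> C * t powr (-1/2)" if t: "t > 0" for t
  proof (cases "X t = 0")
    case True
    then show ?thesis using dm[of t] t C0 by simp
  next
    case False
    then have Xp: "X t > 0" using Xge[of t] t by simp
    have Xsp: "X s > 0" if "0 \<le> s" "s \<le> t" for s
    proof -
      have "(X t)\<^sup>2 \<le> (X s)\<^sup>2" using sq that by simp
      then show ?thesis using Xge[of s] Xp that by (smt (verit) power2_le_imp_le)
    qed
    define \<Psi> where "\<Psi> s = 2 * c * s - 1 / (X s)\<^sup>2" for s
    have "\<Psi> t \<le> \<Psi> 0"
    proof (rule mono_within[of t \<Psi> "\<lambda>s. 2 * c - 2 * X s * Fs \<beta> (X s) / ((X s)\<^sup>2)\<^sup>2" 0 t])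
      fix s assume s: "0 \<le> s" "s \<le> t"
      have nz: "(X s)\<^sup>2 \<noteq> 0" using Xsp[OF s] by simp
      show "(\<Psi> has_real_derivative 2 * c - 2 * X s * Fs \<beta> (X s) / ((X s)\<^sup>2)\<^sup>2) (at s within {0..})"
      proof -
        have h1: "((\<lambda>s. (X s)\<^sup>2) has_real_derivative 2 * X s * (- Fs \<beta> (X s))) (at s within {0..})"
          using DERIV_power[OF dX[OF s(1)], of 2] by (simp add: algebra_simps)
        have h2: "((\<lambda>s. 1 / (X s)\<^sup>2) has_real_derivative (0 * (X s)\<^sup>2 - 1 * (2 * X s * (- Fs \<beta> (X s)))) / ((X s)\<^sup>2 * (X s)\<^sup>2)) (at s within {0..})"
          by (rule DERIV_divide[OF DERIV_const h1 nz])
        have h3: "((\<lambda>s. 2 * c * s) has_real_derivative 2 * c) (at s within {0..})"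
          by (auto intro!: derivative_eq_intros)
        show ?thesis unfolding \<Psi>_def
          by (rule DERIV_cong[OF DERIV_diff[OF h3 h2]]) (simp add: power2_eq_square)
      qed
      have x01: "0 \<le> X s" "X s \<le> 1" using Xge Xle s by auto
      have "c * (X s)^4 \<le> X s * Fs \<beta> (X s)"
        using mult_left_mono[OF Flow[OF x01] x01(1)] by (simp add: power_def algebra_simps numeral_eq_Suc)
      then have "c \<le> X s * Fs \<beta> (X s) / ((X s)\<^sup>2)\<^sup>2" using Xsp[OF s]
        by (simp add: field_simps power_def numeral_eq_Suc)
      then show "2 * c - 2 * X s * Fs \<beta> (X s) / ((X s)\<^sup>2)\<^sup>2 \<le> 0" by simp
    qed (use t in auto)
    then have "2 * c * t - 1 / (X t)\<^sup>2 \<le> - 1" unfolding \<Psi>_def using X0 by simp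
    then have key: "(X t)\<^sup>2 * (2 * c * t) \<le> 1" using Xp by (simp add: field_simps) (smt (verit) zero_le_power2)
    have pw: "t powr (-1/2) = 1 / sqrt t" using t by (simp add: powr_minus_divide powr_half_sqrt)
    have "(2 * X t)\<^sup>2 \<le> (C * (1 / sqrt t))\<^sup>2"
      unfolding C_def using key cpos t by (simp add: field_simps power2_eq_square real_sqrt_mult)
    then have "2 * X t \<le> C * (1 / sqrt t)" by (rule power2_le_imp_le) (use C0 t in simp)
    then show ?thesis using dm[of t] t pw by simp
  qed
  have lim: "((\<lambda>t. diam 3 (Y t)) \<longlongrightarrow> 0) at_top"
  proof (rule tendsto_sandwich[of "\<lambda>_. 0" _ _ "\<lambda>t. C * t powr (-1/2)"])
    show "\<forall>\<^sub>F t in at_top. 0 \<le> diam 3 (Y t)" by (rule eventually_mono[OF eventually_ge_at_top[of 0]]) (rule dm(2))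
    show "\<forall>\<^sub>F t in at_top. diam 3 (Y t) \<le> C * t powr (-1/2)" by (rule eventually_mono[OF eventually_gt_at_top[of 0]]) (rule bound)
    show "((\<lambda>t. C * t powr (-1/2)) \<longlongrightarrow> 0) at_top"
      by (rule tendsto_mult_right_zero) (rule tendsto_neg_powr, simp, rule filterlim_ident)
  qed simp
  show ?thesis using part1 bound lim by blast
qed

end




lemma lip_from_deriv:
  fixes f f' :: "real \<Rightarrow> real"
  assumes d: "\<And>x. (f has_real_derivative f' x) (at x)" and b: "\<And>x. \<bar>f' x\<bar> \<le> L"
  shows "\<bar>f x - f y\<bar> \<le> L * \<bar>x - y\<bar>"
proof -
  have *: "\<bar>f b - f a\<bar> \<le> L * \<bar>b - a\<bar>" if ab: "a < b" for a b
  proof -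
    obtain z where "f b - f a = (b - a) * f' z" using MVT2[OF ab, of f f'] d by blast
    then have "\<bar>f b - f a\<bar> = \<bar>b - a\<bar> * \<bar>f' z\<bar>" by (simp add: abs_mult)
    also have "\<dots> \<le> \<bar>b - a\<bar> * L" using b by (simp add: mult_left_mono)
    finally show ?thesis by (simp add: mult.commute)
  qed
  show ?thesis
    using *[of x y] *[of y x] by (cases x y rule: linorder_cases) (auto simp: abs_minus_commute)
qed

definition b1 :: "real \<Rightarrow> real" where "b1 = (\<lambda>x. 1 / (1 + x))"
definition b2 :: "real \<Rightarrow> real" where "b2 = (\<lambda>x. exp (- x))"

lemma psi1: assumes r: "r \<ge> 0" shows "psi b1 r = - 1 / (1 + r)"
proof -
  have h: "1 + (r*r + r*2) \<noteq> 0" using r by (smt (verit) mult_nonneg_nonneg)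
  show ?thesis unfolding psi_def b1_def
    by (rule DERIV_imp_deriv) (use r h in \<open>auto intro!: derivative_eq_intros simp: field_simps power2_eq_square\<close>)
qed

lemma psi2: "psi b2 r = - 1"
  unfolding psi_def b2_def by simp


lemma Fs_eq: "Fs \<beta> X = -4 * ((1/6 - \<beta>(X\<^sup>2)/(2*(2*\<beta>(X\<^sup>2)+\<beta>(4*X\<^sup>2)))) * X * psi \<beta> (X\<^sup>2)
   + (1/6 - \<beta>(4*X\<^sup>2)/(2*(2*\<beta>(X\<^sup>2)+\<beta>(4*X\<^sup>2)))) * (2*X) * psi \<beta> (4*X\<^sup>2))"
proof -
  have e: "(X - - X)\<^sup>2 = 4*X\<^sup>2" "(0 - - X)\<^sup>2 = X\<^sup>2" "(X - 0)\<^sup>2 = X\<^sup>2" "X - - X = 2 * X"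
    by (simp_all add: power2_eq_square algebra_simps)
  show ?thesis unfolding Fs_def rhs1 Sd_def symc_def by (simp add: e algebra_simps)
qed

lemma Fs_eq2:
  assumes "2 * \<beta> (X\<^sup>2) + \<beta> (4*X\<^sup>2) \<noteq> 0"
  shows "Fs \<beta> X = -4 * X * ((2*\<beta>(X\<^sup>2) + \<beta>(4*X\<^sup>2)) * (psi \<beta> (X\<^sup>2) + 2 * psi \<beta> (4*X\<^sup>2))
      - 3 * (\<beta>(X\<^sup>2) * psi \<beta> (X\<^sup>2) + 2 * \<beta>(4*X\<^sup>2) * psi \<beta> (4*X\<^sup>2))) / (6 * (2*\<beta>(X\<^sup>2) + \<beta>(4*X\<^sup>2)))"
proof -
  have alg3: "S \<noteq> 0 \<Longrightarrow> -4*((1/6 - a/(2*S))*X*p + (1/6 - b/(2*S))*(2*X)*q) = -4*X*(S*(p+2*q) - 3*(a*p + 2*b*q))/(6*S)"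
    for S a b p q :: real by (simp add: field_simps)
  show ?thesis unfolding Fs_eq by (rule alg3[OF assms])
qed

lemma Fs2: "Fs b2 X = 2 * X * (exp (-X\<^sup>2) - exp (-(4*X\<^sup>2))) / (2 * exp (-X\<^sup>2) + exp (-(4*X\<^sup>2)))"
proof -
  define a where "a = exp (-X\<^sup>2)"
  define b where "b = exp (-(4*X\<^sup>2))"
  have pos: "a > 0" "b > 0" unfolding a_def b_def by simp_all
  have "Fs b2 X = -4 * X * ((2*a+b)*(-1 + 2 * -1) - 3*(a * -1 + 2 * b * -1)) / (6*(2*a+b))"
    using Fs_eq2[of b2 X] pos unfolding psi2 unfolding b2_def a_def b_def by simp
  also have "\<dots> = 2 * X * (a - b) / (2*a+b)" using pos by (simp add: field_simps)
  finally show ?thesis unfolding a_def b_def .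
qed

lemma Fs1: "Fs b1 X = 2 * X^3 / ((1 + X\<^sup>2) * (1 + 3*X\<^sup>2) * (1 + 4*X\<^sup>2))"
proof -
  have pos: "1 + X\<^sup>2 > 0" "1 + 3*X\<^sup>2 > 0" "1 + 4*X\<^sup>2 > 0" by (simp_all add: add_pos_nonneg)
  define a where "a = 1 / (1 + X\<^sup>2)"
  define b where "b = 1 / (1 + 4*X\<^sup>2)"
  have ab: "a > 0" "b > 0" unfolding a_def b_def using pos by simp_all
  have p: "psi b1 (X\<^sup>2) = -a" "psi b1 (4*X\<^sup>2) = -b" unfolding a_def b_def by (simp_all add: psi1)
  have bb: "b1 (X\<^sup>2) = a" "b1 (4*X\<^sup>2) = b" unfolding a_def b_def b1_def by simp_all
  have "Fs b1 X = -4 * X * ((2*a+b)*(-a + 2 * -b) - 3*(a * -a + 2 * b * -b)) / (6*(2*a+b))"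
    using Fs_eq2[of b1 X] ab unfolding p bb by simp
  also have "\<dots> = -4 * X * ((a - b) * (a - 4*b)) / (6*(2*a+b))" by (simp add: algebra_simps)
  also have "a - b = 3 * X\<^sup>2 * a * b" unfolding a_def b_def using pos by (simp add: field_simps)
  also have "a - 4*b = - 3 * a * b" unfolding a_def b_def using pos by (simp add: field_simps)
  also have "2*a+b = 3 * (1 + 3*X\<^sup>2) * a * b" unfolding a_def b_def using pos by (simp add: field_simps)
  also have "-4 * X * ((3 * X\<^sup>2 * a * b) * (- 3 * a * b)) / (6*(3 * (1 + 3*X\<^sup>2) * a * b))
      = 2 * X^3 * a * b / (1 + 3*X\<^sup>2)"
  proof -
    have g: "D \<noteq> 0 \<Longrightarrow> a \<noteq> 0 \<Longrightarrow> b \<noteq> 0 \<Longrightarrow> -4 * X * ((3*Q*a*b) * (-3*a*b)) / (6*(3*D*a*b)) = 2*X*Q*a*b/D"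
      for D Q a b :: real by (simp add: field_simps)
    show ?thesis using g[of "1 + 3*X\<^sup>2" a b "X\<^sup>2"] ab pos by (simp add: power2_eq_square power3_eq_cube mult.assoc)
  qed
  also have "\<dots> = 2 * X^3 / ((1 + X\<^sup>2) * (1 + 3*X\<^sup>2) * (1 + 4*X\<^sup>2))"
    unfolding a_def b_def using pos by (simp add: field_simps)
  finally show ?thesis .
qed


lemma hb1: assumes "D \<ge> (1::real)" shows "\<bar>D - 2\<bar> / D\<^sup>2 \<le> 3"
proof -
  have "\<bar>D - 2\<bar> \<le> D" using assms by auto
  also have "D \<le> D * D" using mult_left_mono[of 1 D D] assms by simp
  also have "\<dots> \<le> 3 * D\<^sup>2" using assms by (simp add: power2_eq_square)
  finally show ?thesis using assms by (simp add: pos_divide_le_eq)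
qed

lemma hb2: assumes "D \<ge> (1::real)" shows "\<bar>3 * D - 4\<bar> / D ^ 3 \<le> 3"
proof -
  have "\<bar>3 * D - 4\<bar> \<le> 3 * D" using assms by auto
  also have "D \<le> D * D" using mult_left_mono[of 1 D D] assms by simp
  then have "D \<le> D * D * D" using mult_left_mono[of 1 "D * D" D] assms by (simp add: mult.commute order_trans)
  then have "3 * D \<le> 3 * D ^ 3" by (simp add: power3_eq_cube)
  finally show ?thesis using assms by (simp add: pos_divide_le_eq)
qed

lemma fs1: "fs b1 3 (1/20) 2"
proof
  show "x \<ge> 0 \<Longrightarrow> b1 x > 0" for x unfolding b1_def by simp
  show "continuous_on {0..} b1" unfolding b1_def by (intro continuous_intros) auto
  show "\<bar>x * psi b1 (x\<^sup>2) - y * psi b1 (y\<^sup>2)\<bar> \<le> 3 * \<bar>x - y\<bar>" for x y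
  proof -
    have e: "z * psi b1 (z\<^sup>2) = - z / (1 + z\<^sup>2)" for z by (simp add: psi1)
    have d: "((\<lambda>z. - z / (1 + z\<^sup>2)) has_real_derivative ((1 + z\<^sup>2) - 2) / (1 + z\<^sup>2)\<^sup>2) (at z)" for z :: real
    proof -
      have p: "1 + z\<^sup>2 \<noteq> 0" by (smt (verit) zero_le_power2)
      have g: "((\<lambda>z. 1 + z\<^sup>2) has_real_derivative 2 * z) (at z)" by (auto intro!: derivative_eq_intros)
      have f: "((\<lambda>z. - z) has_real_derivative - 1) (at z)" by (auto intro!: derivative_eq_intros)
      show ?thesis
        by (rule DERIV_cong[OF DERIV_divide[OF f g p]]) (use p in \<open>simp add: field_simps power2_eq_square\<close>)
    qed
    have b: "\<bar>((1 + z\<^sup>2) - 2) / (1 + z\<^sup>2)\<^sup>2\<bar> \<le> 3" for z :: real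
      using hb1[of "1 + z\<^sup>2"] by (simp add: abs_divide)
    show ?thesis unfolding e by (rule lip_from_deriv[OF d b])
  qed
  show "\<bar>x * b1 (x\<^sup>2) * psi b1 (x\<^sup>2) - y * b1 (y\<^sup>2) * psi b1 (y\<^sup>2)\<bar> \<le> 3 * \<bar>x - y\<bar>" for x y
  proof -
    have e: "z * b1 (z\<^sup>2) * psi b1 (z\<^sup>2) = - z / (1 + z\<^sup>2)\<^sup>2" for z
      by (simp only: psi1[OF zero_le_power2]) (simp add: b1_def power2_eq_square)
    have d: "((\<lambda>z. - z / (1 + z\<^sup>2)\<^sup>2) has_real_derivative (3 * (1 + z\<^sup>2) - 4) / (1 + z\<^sup>2) ^ 3) (at z)" for z :: real
    proof -
      have p: "(1 + z\<^sup>2)\<^sup>2 \<noteq> 0" "1 + z\<^sup>2 \<noteq> 0" by (smt (verit) zero_le_power2 power_not_zero)+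
      have g: "((\<lambda>z. (1 + z\<^sup>2)\<^sup>2) has_real_derivative 2 * (1 + z\<^sup>2) * (2 * z)) (at z)" by (auto intro!: derivative_eq_intros)
      have f: "((\<lambda>z. - z) has_real_derivative - 1) (at z)" by (auto intro!: derivative_eq_intros)
      show ?thesis
      proof (rule DERIV_cong[OF DERIV_divide[OF f g p(1)]])
        show "(- 1 * (1 + z\<^sup>2)\<^sup>2 - - z * (2 * (1 + z\<^sup>2) * (2 * z))) / ((1 + z\<^sup>2)\<^sup>2 * (1 + z\<^sup>2)\<^sup>2) = (3 * (1 + z\<^sup>2) - 4) / (1 + z\<^sup>2) ^ 3"
          by (subst frac_eq_eq) (use p in \<open>simp_all, algebra\<close>)
      qed
    qed
    have b: "\<bar>(3 * (1 + z\<^sup>2) - 4) / (1 + z\<^sup>2) ^ 3\<bar> \<le> 3" for z :: real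
      using hb2[of "1 + z\<^sup>2"] by (simp add: abs_divide)
    show ?thesis unfolding e by (rule lip_from_deriv[OF d b])
  qed
  have pos: "(1 + X\<^sup>2) * (1 + 3*X\<^sup>2) * (1 + 4*X\<^sup>2) > 0" for X :: real
    by (intro mult_pos_pos) (simp_all add: add_pos_nonneg)
  show "X * Fs b1 X \<ge> 0" for X
  proof -
    have "X * Fs b1 X = 2 * (X\<^sup>2)\<^sup>2 / ((1 + X\<^sup>2) * (1 + 3*X\<^sup>2) * (1 + 4*X\<^sup>2))"
      unfolding Fs1 by (simp add: power2_eq_square power3_eq_cube mult.assoc)
    then show ?thesis using pos[of X] by simp
  qed
  show "1/20 * X ^ 3 \<le> Fs b1 X" if "0 \<le> X" "X \<le> 1" for X
  proof -
    have x2: "X\<^sup>2 \<le> 1" using that by (simp add: power_le_one)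
    have D40: "(1 + X\<^sup>2) * (1 + 3*X\<^sup>2) * (1 + 4*X\<^sup>2) \<le> 2 * 4 * 5"
      using x2 by (intro mult_mono) (auto simp: add_nonneg_nonneg)
    have "2 * X^3 / (2 * 4 * 5) \<le> 2 * X^3 / ((1 + X\<^sup>2) * (1 + 3*X\<^sup>2) * (1 + 4*X\<^sup>2))"
      by (rule divide_left_mono[OF D40]) (use that pos[of X] in auto)
    then show ?thesis unfolding Fs1 by simp
  qed
  show "(0::real) < 1/20" by simp
  show "continuous_on {0<..} (Fs b1)"
  proof -
    have ps: "1 + X\<^sup>2 \<noteq> 0 \<and> 1 + 3*X\<^sup>2 \<noteq> 0 \<and> 1 + 4*X\<^sup>2 \<noteq> 0" for X :: real
      by (smt (verit) zero_le_power2)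
    show ?thesis unfolding Fs1[abs_def] by (intro continuous_intros) (auto simp: ps)
  qed
  show "0 < Fs b1 x" if "0 < x" "x \<le> 1" for x unfolding Fs1 using pos[of x] that by simp
  show "Fs b1 x \<le> 2 * x" if "0 < x" "x \<le> 1" for x
  proof -
    have x2: "x\<^sup>2 \<le> 1" using that by (simp add: power_le_one)
    have x3: "x ^ 3 \<le> x" using mult_left_mono[OF x2, of x] that by (simp add: power2_eq_square power3_eq_cube)
    have D1: "1 \<le> (1 + x\<^sup>2) * (1 + 3*x\<^sup>2) * (1 + 4*x\<^sup>2)"
      using mult_mono[OF mult_mono, of 1 "1 + x\<^sup>2" 1 "1 + 3*x\<^sup>2" 1 "1 + 4*x\<^sup>2"] by simp
    have "2 * x^3 / ((1 + x\<^sup>2) * (1 + 3*x\<^sup>2) * (1 + 4*x\<^sup>2)) \<le> 2 * x^3 / 1"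
      by (rule divide_left_mono[OF D1]) (use that pos[of x] in auto)
    then show ?thesis unfolding Fs1 using x3 by simp
  qed
  show "(0::real) < 2" by simp
qed


lemma fs2: "fs b2 3 (1/2) 1"
proof
  show "x \<ge> 0 \<Longrightarrow> b2 x > 0" for x unfolding b2_def by simp
  show "continuous_on {0..} b2" unfolding b2_def by (intro continuous_intros)
  show "\<bar>x * psi b2 (x\<^sup>2) - y * psi b2 (y\<^sup>2)\<bar> \<le> 3 * \<bar>x - y\<bar>" for x y
    by (simp add: psi2 abs_minus_commute)
  show "\<bar>x * b2 (x\<^sup>2) * psi b2 (x\<^sup>2) - y * b2 (y\<^sup>2) * psi b2 (y\<^sup>2)\<bar> \<le> 3 * \<bar>x - y\<bar>" for x y
  proof -
    have e: "z * b2 (z\<^sup>2) * psi b2 (z\<^sup>2) = - (z * exp (- z\<^sup>2))" for z by (simp only: psi2) (simp add: b2_def)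
    have d: "((\<lambda>z. - (z * exp (- z\<^sup>2))) has_real_derivative (2 * z\<^sup>2 - 1) * exp (- z\<^sup>2)) (at z)" for z :: real
      by (rule derivative_eq_intros refl | simp)+ (simp add: algebra_simps power2_eq_square)
    have b: "\<bar>(2 * z\<^sup>2 - 1) * exp (- z\<^sup>2)\<bar> \<le> 3" for z :: real
    proof -
      have "\<bar>2 * z\<^sup>2 - 1\<bar> \<le> 3 * (1 + z\<^sup>2)" using zero_le_power2[of z] by (simp add: abs_le_iff)
      also have "\<dots> \<le> 3 * exp (z\<^sup>2)" by (rule mult_left_mono[OF exp_ge_add_one_self]) simp
      finally have "\<bar>2 * z\<^sup>2 - 1\<bar> \<le> 3 * exp (z\<^sup>2)" .
      then show ?thesis by (simp add: abs_mult exp_minus field_simps)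
    qed
    show ?thesis unfolding e by (rule lip_from_deriv[OF d b])
  qed
  have den: "2 * exp (- X\<^sup>2) + exp (- (4 * X\<^sup>2)) > 0" for X :: real by (simp add: add_pos_pos)
  have ab: "exp (- (4 * X\<^sup>2)) \<le> exp (- X\<^sup>2)" for X :: real by simp
  have abs: "exp (- (4 * X\<^sup>2)) < exp (- X\<^sup>2)" if "X \<noteq> 0" for X :: real using that by simp
  show "X * Fs b2 X \<ge> 0" for X
  proof -
    have "X * Fs b2 X = 2 * X\<^sup>2 * (exp (- X\<^sup>2) - exp (- (4 * X\<^sup>2))) / (2 * exp (- X\<^sup>2) + exp (- (4 * X\<^sup>2)))"
      unfolding Fs2 by (simp add: power2_eq_square mult.assoc)
    then show ?thesis using den[of X] ab[of X] by simp
  qed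
  show "1/2 * X ^ 3 \<le> Fs b2 X" if X: "0 \<le> X" "X \<le> 1" for X
  proof -
    define a where "a = exp (- X\<^sup>2)"
    define e where "e = exp (- (3 * X\<^sup>2))"
    have a0: "a > 0" "e > 0" unfolding a_def e_def by simp_all
    have be: "exp (- (4 * X\<^sup>2)) = a * e" unfolding a_def e_def by (simp add: exp_add[symmetric])
    have F: "Fs b2 X = 2 * X * (1 - e) / (2 + e)"
    proof -
      have nz: "2 * a + a * e \<noteq> 0" "2 + e \<noteq> 0" using a0 mult_pos_pos[OF a0] by linarith+
      show ?thesis unfolding Fs2 be a_def[symmetric] by (subst frac_eq_eq[OF nz]) algebra
    qed
    have u: "X\<^sup>2 \<le> 1" "0 \<le> X\<^sup>2" using X by (simp_all add: power_le_one)
    have gi: "1 + 3 * X\<^sup>2 \<le> exp (3 * X\<^sup>2)" by (rule exp_ge_add_one_self)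
    have p: "0 < 1 + 3 * X\<^sup>2" using u(2) by linarith
    have "e = 1 / exp (3 * X\<^sup>2)" unfolding e_def by (simp add: exp_minus divide_inverse)
    also have "\<dots> \<le> 1 / (1 + 3 * X\<^sup>2)" by (rule divide_left_mono[OF gi]) (use p in auto)
    finally have e1: "e \<le> 1 / (1 + 3 * X\<^sup>2)" .
    have e2: "1 / (1 + 3 * X\<^sup>2) \<le> 1 - 3 * X\<^sup>2 / 4"
    proof -
      have g: "1 / (1 + 3 * w) \<le> 1 - 3 * w / 4" if "0 \<le> w" "w \<le> 1" for w :: real
      proof -
        have h0: "0 \<le> w * (1 - w)" using that by simp
        have h: "(1 - 3*w/4) * (1 + 3*w) = 1 + 9/4 * (w * (1 - w))" by algebra
        have "1 \<le> (1 - 3*w/4) * (1 + 3*w)" unfolding h using h0 by simp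
        then show ?thesis using that by (simp add: pos_divide_le_eq)
      qed
      show ?thesis by (rule g[OF u(2) u(1)])
    qed
    have h1: "3 * X\<^sup>2 / 4 \<le> 1 - e" using e1 e2 by simp
    have e3: "e \<le> 1" unfolding e_def by simp
    have "2 * X * (1 - e) / 3 \<le> 2 * X * (1 - e) / (2 + e)"
      by (rule divide_left_mono) (use e3 a0 X in auto)
    moreover have "1/2 * X ^ 3 \<le> 2 * X * (1 - e) / 3"
    proof -
      have "2 * X * (3 * X\<^sup>2 / 4) \<le> 2 * X * (1 - e)" by (rule mult_left_mono[OF h1]) (use X in simp)
      then show ?thesis by (simp add: power2_eq_square power3_eq_cube field_simps)
    qed
    ultimately show ?thesis unfolding F by linarith
  qed
  show "(0::real) < 1/2" by simp
  show "continuous_on {0<..} (Fs b2)"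
    unfolding Fs2[abs_def] using den by (intro continuous_intros) (auto simp: less_imp_neq[symmetric])
  show "0 < Fs b2 x" if "0 < x" "x \<le> 1" for x
    unfolding Fs2 using den[of x] abs[of x] that by simp
  show "Fs b2 x \<le> 1 * x" if "0 < x" "x \<le> 1" for x
  proof -
    have "2 * (exp (- x\<^sup>2) - exp (- (4 * x\<^sup>2))) \<le> 2 * exp (- x\<^sup>2) + exp (- (4 * x\<^sup>2))" by simp
    then have "2 * (exp (- x\<^sup>2) - exp (- (4 * x\<^sup>2))) / (2 * exp (- x\<^sup>2) + exp (- (4 * x\<^sup>2))) \<le> 1"
      using den[of x] by simp
    from mult_left_mono[OF this, of x] that
    have "x * (2 * (exp (- x\<^sup>2) - exp (- (4 * x\<^sup>2))) / (2 * exp (- x\<^sup>2) + exp (- (4 * x\<^sup>2)))) \<le> x" by simp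
    moreover have "Fs b2 x = x * (2 * (exp (- x\<^sup>2) - exp (- (4 * x\<^sup>2))) / (2 * exp (- x\<^sup>2) + exp (- (4 * x\<^sup>2))))"
      unfolding Fs2 by (simp only: times_divide_eq_right mult.assoc mult.left_commute[of x 2])
    ultimately show ?thesis by simp
  qed
  show "(0::real) < 1" by simp
qed


theorem mainTheorem6:
  fixes \<beta> :: "real \<Rightarrow> real"
  assumes "\<beta> = (\<lambda>x. 1 / (1 + x)) \<or> \<beta> = (\<lambda>x. exp (- x))"
  shows "(\<exists>Y. is_flow_solution 3 (\<lambda>i j. 1/6) \<beta> Y \<and> Y 0 1 = 1 \<and> Y 0 2 = 0 \<and> Y 0 3 = -1)
    \<and> (\<forall>Y. is_flow_solution 3 (\<lambda>i j. 1/6) \<beta> Y \<and> Y 0 1 = 1 \<and> Y 0 2 = 0 \<and> Y 0 3 = -1 \<longrightarrow>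
          (\<exists>X :: real \<Rightarrow> real. \<forall>t\<ge>0. Y t 1 = X t \<and> Y t 2 = 0 \<and> Y t 3 = - X t
                                      \<and> 0 \<le> X t \<and> X t \<le> 1)
        \<and> (\<exists>C. \<forall>t>0. diam 3 (Y t) \<le> C * t powr (-1/2))
        \<and> ((\<lambda>t. diam 3 (Y t)) \<longlongrightarrow> 0) at_top)"
proof -
  from assms have "\<beta> = b1 \<or> \<beta> = b2" unfolding b1_def b2_def by auto
  then show ?thesis
  proof
    assume "\<beta> = b1"
    show ?thesis unfolding \<open>\<beta> = b1\<close> using fs.exist[OF fs1] fs.decay[OF fs1] by blast
  next
    assume "\<beta> = b2"
    show ?thesis unfolding \<open>\<beta> = b2\<close> using fs.exist[OF fs2] fs.decay[OF fs2] by blast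
  qed
qed


end
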